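(* Let $(\boldsymbol{\beta},\mathbf{u})$ be a domain index, i.e. $(\boldsymbol{\beta},\mathbf{u}) \in \operatorname{argmax}_{\boldsymbol{\beta}',\mathbf{u}'} \big[I_{\mathbf{x}}(\boldsymbol{\beta}',\mathbf{u}') + I_y(\boldsymbol{\beta}')\big]$, the argmax being over domain-associated variables $\boldsymbol{\beta}'$ and data-associated variables $\mathbf{u}'$. Then $I_{\mathbf{x}}(\boldsymbol{\beta},\mathbf{u}) = H(\mathbf{x})$ and $I_y(\boldsymbol{\beta}) = I(y;\mathbf{x})$.
   Context: Data $\mathbf{x}$, label $y$ and a domain variable are given random variables. A domain-associated variable $\boldsymbol{\beta}$ is one that takes the same value for all data in a given domain (this includes constants); a data-associated variable $\mathbf{u}$ may take a different value for each data point (this includes constants). A data encoding $\mathbf{z}$ is a random variable obtained from $\mathbf{x}$ through a conditional distribution $q(\mathbf{z}\mid\mathbf{x})$ (so $\mathbf{z}$ is conditionally independent of all other variables given $\mathbf{x}$; e.g. $\mathbf{z}=\mathbf{x}$ is allowed). Data orthogonal information: $I_{\mathbf{x}}(\boldsymbol{\beta},\mathbf{u}) := \max_{\mathbf{z}:\,\mathbf{z}\perp\!\!\!\perp\boldsymbol{\beta}} I(\mathbf{x};\mathbf{u},\boldsymbol{\beta},\mathbf{z})$; label orthogonal information: $I_y(\boldsymbol{\beta}) := \max_{\mathbf{z}:\,\mathbf{z}\perp\!\!\!\perp\boldsymbol{\beta}} I(y;\mathbf{z})$, the maxima being over data encodings $\mathbf{z}$ independent of $\boldsymbol{\beta}$.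 $H(\mathbf{x})$ is the (Shannon) entropy of $\mathbf{x}$; the variables are taken discrete so that $I(\mathbf{x};\mathbf{x})=H(\mathbf{x})$. *)

theory Defs
  imports "HOL-Probability.Probability"
begin

text \<open>The underlying data distribution is a pmf P on a sample space 'a;
  the given random variables are x = X, y = Y and the domain variable D.
  Auxiliary variables (domain-associated beta, data-associated u, encodings z) take values
  in nat (any discrete variable can be relabelled injectively into nat).\<close>

definition MI :: "'w pmf \<Rightarrow> ('w \<Rightarrow> 's) \<Rightarrow> ('w \<Rightarrow> 't) \<Rightarrow> real" where
  "MI M A B = prob_space.mutual_information (measure_pmf M) 2
      (count_space UNIV) (count_space UNIV) A B"

definition Ent :: "'w pmf \<Rightarrow> ('w \<Rightarrow> 's) \<Rightarrow> real" where
  "Ent M A = prob_space.entropy (measure_pmf M) 2 (count_space UNIV) A"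

definition Indep :: "'w pmf \<Rightarrow> ('w \<Rightarrow> 's) \<Rightarrow> ('w \<Rightarrow> 't) \<Rightarrow> bool" where
  "Indep M A B = (\<forall>a b. measure_pmf.prob M {w. A w = a \<and> B w = b}
      = measure_pmf.prob M {w. A w = a} * measure_pmf.prob M {w. B w = b})"

text \<open>Data encoding: a conditional distribution q(z|x). The joint law of (data point, z).\<close>
definition ext :: "'a pmf \<Rightarrow> ('a \<Rightarrow> 'x) \<Rightarrow> ('x \<Rightarrow> nat pmf) \<Rightarrow> ('a \<times> nat) pmf" where
  "ext P X q = bind_pmf P (\<lambda>\<omega>. map_pmf (\<lambda>z. (\<omega>, z)) (q (X \<omega>)))"

text \<open>A domain-associated variable is beta = g(D); a data-associated variable is u(omega).
  Data orthogonal information I_x(beta,u).\<close>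
definition Ix :: "'a pmf \<Rightarrow> ('a \<Rightarrow> 'x) \<Rightarrow> ('a \<Rightarrow> 'd) \<Rightarrow> ('d \<Rightarrow> nat) \<Rightarrow> ('a \<Rightarrow> nat) \<Rightarrow> real" where
  "Ix P X D g u = (SUP q \<in> {q. Indep (ext P X q) snd (\<lambda>w. g (D (fst w)))}.
      MI (ext P X q) (\<lambda>w. X (fst w)) (\<lambda>w. (u (fst w), g (D (fst w)), snd w)))"

definition Iy :: "'a pmf \<Rightarrow> ('a \<Rightarrow> 'x) \<Rightarrow> ('a \<Rightarrow> 'y) \<Rightarrow> ('a \<Rightarrow> 'd) \<Rightarrow> ('d \<Rightarrow> nat) \<Rightarrow> real" where
  "Iy P X Y D g = (SUP q \<in> {q. Indep (ext P X q) snd (\<lambda>w. g (D (fst w)))}.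
      MI (ext P X q) (\<lambda>w. Y (fst w)) snd)"

end

theory Submission
  imports Defs
begin


lemma pmf_pair_le_fst:
  "pmf (map_pmf (\<lambda>w. (A w, B w)) M) (x, y) \<le> pmf (map_pmf A M) x"
  unfolding pmf_map by (intro measure_pmf.finite_measure_mono) auto

lemma pmf_pair_le_snd:
  "pmf (map_pmf (\<lambda>w. (A w, B w)) M) (x, y) \<le> pmf (map_pmf B M) y"
  unfolding pmf_map by (intro measure_pmf.finite_measure_mono) auto

lemma pair_measure_pmf_agree:
  fixes pa :: "'s pmf" and pb :: "'t pmf"
  assumes E: "E \<in> sets (measure_pmf pa \<Otimes>\<^sub>M measure_pmf pb)"
  shows "emeasure (measure_pmf pa \<Otimes>\<^sub>M measure_pmf pb) E = emeasure (measure_pmf (pair_pmf pa pb)) E"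
proof -
  interpret pair_sigma_finite "measure_pmf pa" "measure_pmf pb" by unfold_locales
  have "emeasure (measure_pmf pa \<Otimes>\<^sub>M measure_pmf pb) E = (\<integral>\<^sup>+x. \<integral>\<^sup>+y. indicator E (x, y) \<partial>pb \<partial>pa)"
    using E by (rule measure_pmf.emeasure_pair_measure)
  also have "\<dots> = (\<integral>\<^sup>+x. indicator E x \<partial>pair_pmf pa pb)"
    by (simp add: nn_integral_pair_pmf')
  also have "\<dots> = emeasure (measure_pmf (pair_pmf pa pb)) E"
    by simp
  finally show ?thesis .
qed

lemma MI_formula:
  fixes M :: "'w pmf" and A :: "'w \<Rightarrow> 's" and B :: "'w \<Rightarrow> 't"
  assumes fin: "finite (A ` set_pmf M)"
  shows "MI M A B = (\<integral>w. log 2 (pmf (map_pmf (\<lambda>w. (A w, B w)) M) (A w, B w) /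
            (pmf (map_pmf A M) (A w) * pmf (map_pmf B M) (B w))) \<partial>M)"
proof -
  define pa where "pa = map_pmf A M"
  define pb where "pb = map_pmf B M"
  define pab where "pab = map_pmf (\<lambda>w. (A w, B w)) M"
  define f where "f = (\<lambda>(x,y). pmf pab (x,y) / (pmf pa x * pmf pb y))"
  define P where "P = measure_pmf pa \<Otimes>\<^sub>M measure_pmf pb"
  define Q where "Q = distr (measure_pmf M) (count_space UNIV \<Otimes>\<^sub>M count_space UNIV) (\<lambda>w. (A w, B w))"
  have da: "distr (measure_pmf M) (count_space UNIV) A = measure_pmf pa"
    unfolding pa_def map_pmf_rep_eq ..
  have db: "distr (measure_pmf M) (count_space UNIV) B = measure_pmf pb"
    unfolding pb_def map_pmf_rep_eq ..
  have MI_eq: "MI M A B = KL_divergence 2 P Q"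
    unfolding MI_def prob_space.mutual_information_def[OF measure_pmf.prob_space_axioms] da db P_def Q_def ..
  have setsP: "sets P = sets (count_space UNIV \<Otimes>\<^sub>M count_space UNIV)"
    unfolding P_def by (intro sets_pair_measure_cong) auto
  have setsQ: "sets Q = sets (count_space UNIV \<Otimes>\<^sub>M count_space UNIV)"
    unfolding Q_def by simp
  have key: "pmf (pair_pmf pa pb) z * f z = pmf pab z" for z
  proof -
    obtain x y where z: "z = (x, y)" by (cases z)
    show ?thesis
    proof (cases "pmf pa x * pmf pb y = 0")
      case True
      have "pmf pab (x, y) \<le> pmf pa x" "pmf pab (x, y) \<le> pmf pb y"
        unfolding pab_def pa_def pb_def by (rule pmf_pair_le_fst, rule pmf_pair_le_snd)
      then have "pmf pab (x, y) = 0" using True pmf_nonneg[of pab "(x,y)"] by auto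
      then show ?thesis using True by (simp add: z f_def pmf_pair)
    next
      case False
      then show ?thesis by (simp add: z f_def pmf_pair)
    qed
  qed
  have f_alt: "f = (\<lambda>z. \<Sum>a\<in>A ` set_pmf M. indicator {a} (fst z) * f (a, snd z))"
  proof (rule ext)
    fix z :: "'s \<times> 't"
    obtain x y where z: "z = (x, y)" by (cases z)
    show "f z = (\<Sum>a\<in>A ` set_pmf M. indicator {a} (fst z) * f (a, snd z))"
    proof (cases "x \<in> A ` set_pmf M")
      case True
      have "(\<Sum>a\<in>A ` set_pmf M. indicator {a} x * f (a, y)) = (\<Sum>a\<in>A ` set_pmf M. if x = a then f (a, y) else 0)"
        by (intro sum.cong) (auto simp: indicator_def)
      also have "\<dots> = f (x, y)" using fin True by (simp add: sum.delta)
      finally show ?thesis by (simp add: z)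
    next
      case False
      then have "pmf pa x = 0" by (simp add: pa_def pmf_eq_0_set_pmf)
      moreover have "pmf pab (x, y) \<le> pmf pa x"
        unfolding pab_def pa_def by (rule pmf_pair_le_fst)
      ultimately have "f z = 0" using pmf_nonneg[of pab "(x,y)"] by (simp add: z f_def)
      moreover have "(\<Sum>a\<in>A ` set_pmf M. indicator {a} (fst z) * f (a, snd z)) = 0"
        using False by (intro sum.neutral) (auto simp: z indicator_def)
      ultimately show ?thesis by simp
    qed
  qed
  have f_meas: "f \<in> borel_measurable P"
    apply (subst f_alt)
    unfolding P_def
    by (intro borel_measurable_sum borel_measurable_times
        measurable_compose[OF measurable_fst] measurable_compose[OF measurable_snd]) simp_all
  have AB_meas: "(\<lambda>w. (A w, B w)) \<in> measurable (measure_pmf M) (count_space UNIV \<Otimes>\<^sub>M count_space UNIV)"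
    by (simp add: space_pair_measure)
  have dens: "density P (\<lambda>z. ennreal (f z)) = Q"
  proof (rule measure_eqI)
    show "sets (density P (\<lambda>z. ennreal (f z))) = sets Q" using setsP setsQ by simp
  next
    fix E assume "E \<in> sets (density P (\<lambda>z. ennreal (f z)))"
    then have E: "E \<in> sets P" by simp
    have "emeasure (density P (\<lambda>z. ennreal (f z))) E = (\<integral>\<^sup>+z. ennreal (f z) * indicator E z \<partial>P)"
      using E f_meas by (simp add: emeasure_density)
    also have "\<dots> = (\<integral>\<^sup>+z. ennreal (f z) * indicator E z \<partial>measure_pmf (pair_pmf pa pb))"
    proof (rule nn_integral_subalgebra)
      show "(\<lambda>z. ennreal (f z) * indicator E z) \<in> borel_measurable P"
        using E f_meas by measurable
      show "sets P \<subseteq> sets (measure_pmf (pair_pmf pa pb))" by simp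
      show "space P = space (measure_pmf (pair_pmf pa pb))" by (simp add: P_def space_pair_measure)
      show "emeasure P A = emeasure (measure_pmf (pair_pmf pa pb)) A" if "A \<in> sets P" for A
        using that unfolding P_def by (rule pair_measure_pmf_agree)
    qed
    also have "\<dots> = (\<integral>\<^sup>+z. ennreal (pmf pab z) * indicator E z \<partial>count_space UNIV)"
      unfolding nn_integral_measure_pmf
      by (intro nn_integral_cong) (simp add: mult.assoc[symmetric] key ennreal_mult'[symmetric] del: ennreal_mult')
    also have "\<dots> = emeasure (measure_pmf pab) E"
      by (simp add: nn_integral_measure_pmf[symmetric])
    also have "\<dots> = emeasure Q E"
      using E setsP AB_meas unfolding Q_def pab_def map_pmf_rep_eq
      by (subst (1 2) emeasure_distr) simp_all
    finally show "emeasure (density P (\<lambda>z. ennreal (f z))) E = emeasure Q E" .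
  qed
  have Qprob: "prob_space Q" unfolding Q_def by (rule measure_pmf.prob_space_distr) (rule AB_meas)
  have AE_P: "AE z in P. ennreal (f z) = RN_deriv P Q z"
    by (rule RN_deriv_unique_sigma_finite[OF _ dens])
       (use f_meas Qprob prob_space_imp_sigma_finite in auto)
  have f_nn: "f z \<ge> 0" for z by (cases z) (simp add: f_def)
  have "AE z in density P (\<lambda>z. ennreal (f z)). f z = enn2real (RN_deriv P Q z)"
  proof -
    have "AE z in P. f z = enn2real (RN_deriv P Q z)"
      using AE_P by eventually_elim (metis enn2real_ennreal f_nn)
    then show ?thesis using f_meas
      by (subst AE_density) (auto elim!: eventually_mono)
  qed
  then have AE_Q: "AE z in Q. f z = enn2real (RN_deriv P Q z)" by (simp only: dens)
  have lf_meas: "(\<lambda>z. log 2 (f z)) \<in> borel_measurable (count_space UNIV \<Otimes>\<^sub>M count_space UNIV)"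
  proof -
    have [measurable]: "f \<in> borel_measurable (count_space UNIV \<Otimes>\<^sub>M count_space UNIV)"
      by (subst measurable_cong_sets[OF setsP[symmetric] refl]) (rule f_meas)
    show ?thesis by measurable
  qed
  have "KL_divergence 2 P Q = (\<integral>z. log 2 (f z) \<partial>Q)"
    unfolding KL_divergence_def
  proof (rule integral_cong_AE)
    show "entropy_density 2 P Q \<in> borel_measurable Q"
      by (subst measurable_cong_sets[OF setsQ refl], subst measurable_cong_sets[OF setsP[symmetric] refl])
         (rule measurable_entropy_density)
    show "(\<lambda>z. log 2 (f z)) \<in> borel_measurable Q"
      by (subst measurable_cong_sets[OF setsQ refl]) (rule lf_meas)
    show "AE z in Q. entropy_density 2 P Q z = log 2 (f z)"
      using AE_Q by eventually_elim (simp add: entropy_density_def)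
  qed
  also have "\<dots> = (\<integral>w. log 2 (f (A w, B w)) \<partial>M)"
    unfolding Q_def by (rule integral_distr) (use lf_meas AB_meas in auto)
  finally show ?thesis unfolding MI_eq f_def pa_def pb_def pab_def by simp
qed



lemma Ent_formula:
  fixes M :: "'w pmf" and A :: "'w \<Rightarrow> 's"
  shows "Ent M A = - (\<integral>w. log 2 (pmf (map_pmf A M) (A w)) \<partial>M)"
proof -
  define pa where "pa = map_pmf A M"
  have da: "distr (measure_pmf M) (count_space UNIV) A = measure_pmf pa"
    unfolding pa_def map_pmf_rep_eq ..
  have E: "Ent M A = - KL_divergence 2 (count_space UNIV) (measure_pmf pa)"
    unfolding Ent_def prob_space.entropy_def[OF measure_pmf.prob_space_axioms] da ..
  have dens: "density (count_space UNIV) (\<lambda>x. ennreal (pmf pa x)) = measure_pmf pa"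
    by (rule measure_pmf_eq_density[symmetric])
  have AE1: "AE x in count_space UNIV. ennreal (pmf pa x) = RN_deriv (count_space UNIV) (measure_pmf pa) x"
    by (rule RN_deriv_unique_sigma_finite[OF _ dens])
       (simp_all add: prob_space_imp_sigma_finite measure_pmf.prob_space_axioms)
  have "AE x in density (count_space UNIV) (\<lambda>x. ennreal (pmf pa x)). pmf pa x = enn2real (RN_deriv (count_space UNIV) (measure_pmf pa) x)"
  proof -
    have "AE x in count_space UNIV. pmf pa x = enn2real (RN_deriv (count_space UNIV) (measure_pmf pa) x)"
      using AE1 by eventually_elim (metis enn2real_ennreal pmf_nonneg)
    then show ?thesis by (subst AE_density) (auto elim!: eventually_mono)
  qed
  then have AE2: "AE x in measure_pmf pa. pmf pa x = enn2real (RN_deriv (count_space UNIV) (measure_pmf pa) x)"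
    by (simp only: dens)
  have "KL_divergence 2 (count_space UNIV) (measure_pmf pa) = (\<integral>x. log 2 (pmf pa x) \<partial>pa)"
    unfolding KL_divergence_def
    by (rule integral_cong_AE) (use AE2 in \<open>auto elim!: eventually_mono simp: entropy_density_def\<close>)
  also have "\<dots> = (\<integral>w. log 2 (pmf pa (A w)) \<partial>M)"
    unfolding pa_def by simp
  finally show ?thesis unfolding E pa_def by simp
qed

lemma pmf_map_pos: "w \<in> set_pmf M \<Longrightarrow> 0 < pmf (map_pmf f M) (f w)"
  by (rule pmf_positive) simp

lemma integrable_fin_image:
  fixes h :: "'s \<Rightarrow> real"
  assumes "finite (F ` set_pmf M)"
  shows "integrable M (\<lambda>w. h (F w))"
proof -
  have "integrable (map_pmf F M) h"
    by (rule integrable_measure_pmf_finite) (use assms in simp)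
  then show ?thesis by simp
qed

lemma MI_le_Ent:
  fixes M :: "'w pmf" and A :: "'w \<Rightarrow> 's" and B :: "'w \<Rightarrow> 't"
  assumes fin: "finite (A ` set_pmf M)"
  shows "MI M A B \<le> Ent M A"
proof -
  define F where "F = (\<lambda>w. log 2 (pmf (map_pmf (\<lambda>w. (A w, B w)) M) (A w, B w) /
            (pmf (map_pmf A M) (A w) * pmf (map_pmf B M) (B w))))"
  define G where "G = (\<lambda>w. - log 2 (pmf (map_pmf A M) (A w)))"
  have MI: "MI M A B = integral\<^sup>L M F" unfolding F_def by (rule MI_formula[OF fin])
  have En: "Ent M A = integral\<^sup>L M G" unfolding G_def Ent_formula by simp
  have Gint: "integrable M G" unfolding G_def by (rule integrable_fin_image[OF fin])
  have Gnn: "0 \<le> G w" for w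
  proof (cases "pmf (map_pmf A M) (A w) = 0")
    case False
    then have "0 < pmf (map_pmf A M) (A w)" using pmf_nonneg[of "map_pmf A M"] by (simp add: less_le)
    then show ?thesis unfolding G_def using pmf_le_1[of "map_pmf A M" "A w"] by simp
  qed (simp add: G_def log_def)
  show ?thesis
  proof (cases "integrable M F")
    case False
    then show ?thesis unfolding MI En using Gnn by (simp add: not_integrable_integral_eq integral_nonneg)
  next
    case True
    have "integral\<^sup>L M F \<le> integral\<^sup>L M G"
    proof (rule integral_mono_AE[OF True Gint])
      show "AE w in M. F w \<le> G w"
        unfolding AE_measure_pmf_iff
      proof
        fix w assume w: "w \<in> set_pmf M"
        define pab where "pab = pmf (map_pmf (\<lambda>w. (A w, B w)) M) (A w, B w)"
        define pa where "pa = pmf (map_pmf A M) (A w)"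
        define pb where "pb = pmf (map_pmf B M) (B w)"
        have pos: "0 < pab" "0 < pa" "0 < pb" unfolding pab_def pa_def pb_def
          using pmf_map_pos[OF w, of "\<lambda>w. (A w, B w)"] pmf_map_pos[OF w, of A] pmf_map_pos[OF w, of B]
          by auto
        have le: "pab \<le> pb" unfolding pab_def pb_def by (rule pmf_pair_le_snd)
        have "pab / (pa * pb) \<le> 1 / pa" using pos le by (simp add: field_simps)
        then have "log 2 (pab / (pa * pb)) \<le> log 2 (1 / pa)" using pos by simp
        also have "\<dots> = - log 2 pa" using pos by (simp add: log_divide)
        finally show "F w \<le> G w" unfolding F_def G_def pab_def pa_def pb_def .
      qed
    qed
    then show ?thesis unfolding MI En .
  qed
qed

lemma MI_eq_Ent_det:
  fixes M :: "'w pmf" and A :: "'w \<Rightarrow> 's" and B :: "'w \<Rightarrow> 't"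
  assumes fin: "finite (A ` set_pmf M)"
    and det: "\<And>w w'. w \<in> set_pmf M \<Longrightarrow> w' \<in> set_pmf M \<Longrightarrow> B w = B w' \<Longrightarrow> A w = A w'"
  shows "MI M A B = Ent M A"
proof -
  have "MI M A B = (\<integral>w. - log 2 (pmf (map_pmf A M) (A w)) \<partial>M)"
    unfolding MI_formula[OF fin]
  proof (rule integral_cong_AE)
    show "AE w in M. log 2 (pmf (map_pmf (\<lambda>w. (A w, B w)) M) (A w, B w) /
            (pmf (map_pmf A M) (A w) * pmf (map_pmf B M) (B w))) = - log 2 (pmf (map_pmf A M) (A w))"
      unfolding AE_measure_pmf_iff
    proof
      fix w assume w: "w \<in> set_pmf M"
      define pab where "pab = pmf (map_pmf (\<lambda>w. (A w, B w)) M) (A w, B w)"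
      define pa where "pa = pmf (map_pmf A M) (A w)"
      define pb where "pb = pmf (map_pmf B M) (B w)"
      have pos: "0 < pa" "0 < pb" unfolding pa_def pb_def
        using pmf_map_pos[OF w, of A] pmf_map_pos[OF w, of B] by auto
      have "pab = measure M ((\<lambda>w. (A w, B w)) -` {(A w, B w)} \<inter> set_pmf M)"
        unfolding pab_def pmf_map measure_Int_set_pmf ..
      also have "(\<lambda>w. (A w, B w)) -` {(A w, B w)} \<inter> set_pmf M = B -` {B w} \<inter> set_pmf M"
        using det[OF w] by auto
      also have "measure M \<dots> = pb" unfolding pb_def pmf_map measure_Int_set_pmf ..
      finally have "pab = pb" .
      then have "log 2 (pab / (pa * pb)) = log 2 (1 / pa)" using pos by simp
      also have "\<dots> = - log 2 pa" using pos by (simp add: log_divide)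
      finally show "log 2 (pmf (map_pmf (\<lambda>w. (A w, B w)) M) (A w, B w) /
            (pmf (map_pmf A M) (A w) * pmf (map_pmf B M) (B w))) = - log 2 (pmf (map_pmf A M) (A w))"
        unfolding pab_def pa_def pb_def .
    qed
  qed simp_all
  also have "\<dots> = Ent M A" unfolding Ent_formula by simp
  finally show ?thesis .
qed

lemma measure_cond_pmf':
  assumes ne: "set_pmf p \<inter> s \<noteq> {}"
  shows "measure (measure_pmf (cond_pmf p s)) S = measure p (S \<inter> s) / measure p s"
proof -
  obtain x where "x \<in> set_pmf p" "x \<in> s" using ne by blast
  then have pos: "0 < measure p s" by (rule measure_pmf_posI)
  have "emeasure (measure_pmf (cond_pmf p s)) S = emeasure p (s \<inter> S) / emeasure p s"
    unfolding cond_pmf.rep_eq[OF ne] by simp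
  also have "\<dots> = ennreal (measure p (S \<inter> s) / measure p s)"
    using pos by (simp add: measure_pmf.emeasure_eq_measure divide_ennreal Int_commute)
  finally show ?thesis
    by (simp add: measure_pmf.emeasure_eq_measure)
qed



lemma DPI_int:
  fixes M :: "'w pmf" and A :: "'w \<Rightarrow> 'a" and C :: "'w \<Rightarrow> 'c" and Z :: "'w \<Rightarrow> 'z"
  defines "pA \<equiv> map_pmf A M" and "pC \<equiv> map_pmf C M" and "pZ \<equiv> map_pmf Z M"
    and "pAC \<equiv> map_pmf (\<lambda>w. (A w, C w)) M" and "pAZ \<equiv> map_pmf (\<lambda>w. (A w, Z w)) M"
    and "pCZ \<equiv> map_pmf (\<lambda>w. (C w, Z w)) M" and "r \<equiv> map_pmf (\<lambda>w. (A w, C w, Z w)) M"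
  assumes finA: "finite (A ` set_pmf M)" and finC: "finite (C ` set_pmf M)"
    and CI: "\<And>w. w \<in> set_pmf M \<Longrightarrow>
      pmf r (A w, C w, Z w) * pmf pC (C w) = pmf pAC (A w, C w) * pmf pCZ (C w, Z w)"
    and int2: "integrable M (\<lambda>w. log 2 (pmf pAZ (A w, Z w) / (pmf pA (A w) * pmf pZ (Z w))))"
  shows "MI M A Z \<le> MI M A C"
proof -
  define f1 where "f1 = (\<lambda>w. log 2 (pmf pAC (A w, C w) / (pmf pA (A w) * pmf pC (C w))))"
  define f2 where "f2 = (\<lambda>w. log 2 (pmf pAZ (A w, Z w) / (pmf pA (A w) * pmf pZ (Z w))))"
  have MI1: "MI M A C = integral\<^sup>L M f1"
    unfolding f1_def pAC_def pA_def pC_def by (rule MI_formula[OF finA])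
  have MI2: "MI M A Z = integral\<^sup>L M f2"
    unfolding f2_def pAZ_def pA_def pZ_def by (rule MI_formula[OF finA])
  have int1: "integrable M f1"
  proof -
    have "finite ((\<lambda>w. (A w, C w)) ` set_pmf M)"
      by (rule finite_subset[OF _ finite_cartesian_product[OF finA finC]]) auto
    from integrable_fin_image[OF this, of "\<lambda>(a,c). log 2 (pmf pAC (a, c) / (pmf pA a * pmf pC c))"]
    show ?thesis unfolding f1_def by simp
  qed
  define K where "K = (\<lambda>z. if set_pmf M \<inter> {w. Z w = z} \<noteq> {}
      then map_pmf C (cond_pmf M {w. Z w = z}) else return_pmf undefined)"
  define s where "s = bind_pmf pAZ (\<lambda>(a,z). map_pmf (\<lambda>c. (a,c,z)) (K z))"
  have s_val: "pmf s (A w, C w, Z w) = pmf pAZ (A w, Z w) * pmf pCZ (C w, Z w) / pmf pZ (Z w)"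
    if w: "w \<in> set_pmf M" for w
  proof -
    define a c z where "a = A w" and "c = C w" and "z = Z w"
    have "pmf s (a, c, z) = (\<integral>y. pmf ((\<lambda>(a,z). map_pmf (\<lambda>c. (a,c,z)) (K z)) y) (a, c, z) \<partial>pAZ)"
      unfolding s_def pmf_bind ..
    also have "\<dots> = (\<Sum>y\<in>{(a,z)}. pmf ((\<lambda>(a,z). map_pmf (\<lambda>c. (a,c,z)) (K z)) y) (a, c, z) * pmf pAZ y)"
    proof (rule integral_measure_pmf_real)
      fix y assume "y \<in> set_pmf pAZ" "pmf ((\<lambda>(a,z). map_pmf (\<lambda>c. (a,c,z)) (K z)) y) (a, c, z) \<noteq> 0"
      then have "(a, c, z) \<in> set_pmf ((\<lambda>(a,z). map_pmf (\<lambda>c. (a,c,z)) (K z)) y)"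
        by (simp add: set_pmf_iff)
      then show "y \<in> {(a, z)}" by (cases y) auto
    qed simp
    also have "\<dots> = pmf (map_pmf (\<lambda>c. (a,c,z)) (K z)) (a, c, z) * pmf pAZ (a, z)" by simp
    also have "pmf (map_pmf (\<lambda>c. (a,c,z)) (K z)) (a, c, z) = pmf (K z) c"
      by (rule pmf_map_inj') (auto simp: inj_def)
    also have ne: "set_pmf M \<inter> {w. Z w = z} \<noteq> {}" using w z_def by auto
    then have "pmf (K z) c = measure M (C -` {c} \<inter> {w. Z w = z}) / measure M {w. Z w = z}"
      unfolding K_def by (simp add: pmf_map measure_cond_pmf'[OF ne])
    also have "C -` {c} \<inter> {w. Z w = z} = (\<lambda>w. (C w, Z w)) -` {(c, z)}" by auto
    also have "measure M \<dots> = pmf pCZ (c, z)" unfolding pCZ_def pmf_map ..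
    also have "{w. Z w = z} = Z -` {z}" by auto
    also have "measure M \<dots> = pmf pZ z" unfolding pZ_def pmf_map ..
    finally show ?thesis unfolding a_def c_def z_def by simp
  qed
  define t where "t = (\<lambda>w. pmf s (A w, C w, Z w) / pmf r (A w, C w, Z w))"
  have t_nn: "0 \<le> t w" for w unfolding t_def by simp
  have t_nn_int: "(\<integral>\<^sup>+w. ennreal (t w) \<partial>M) \<le> 1"
  proof -
    have "(\<integral>\<^sup>+w. ennreal (t w) \<partial>M) = (\<integral>\<^sup>+x. ennreal (pmf s x / pmf r x) \<partial>r)"
      unfolding r_def t_def by simp
    also have "\<dots> = (\<integral>\<^sup>+x. ennreal (pmf r x) * ennreal (pmf s x / pmf r x) \<partial>count_space UNIV)"
      by (rule nn_integral_measure_pmf)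
    also have "\<dots> \<le> (\<integral>\<^sup>+x. ennreal (pmf s x) \<partial>count_space UNIV)"
    proof (rule nn_integral_mono)
      fix x
      have "pmf r x * (pmf s x / pmf r x) \<le> pmf s x"
        by (cases "pmf r x = 0") simp_all
      then show "ennreal (pmf r x) * ennreal (pmf s x / pmf r x) \<le> ennreal (pmf s x)"
        by (simp add: ennreal_mult'[symmetric])
    qed
    also have "\<dots> = emeasure (measure_pmf s) UNIV" by (rule nn_integral_pmf)
    also have "\<dots> = 1" by simp
    finally show ?thesis .
  qed
  have t_int: "integrable M t"
    by (rule integrableI_nonneg) (use t_nn t_nn_int in \<open>auto simp: top.not_eq_extremum intro: le_less_trans\<close>)
  have t_le: "integral\<^sup>L M t \<le> 1"
  proof -
    have "integral\<^sup>L M t = enn2real (\<integral>\<^sup>+w. ennreal (t w) \<partial>M)"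
      by (rule integral_eq_nn_integral) (simp_all add: t_nn)
    also have "\<dots> \<le> 1" by (rule enn2real_leI) (use t_nn_int in simp_all)
    finally show ?thesis .
  qed
  have pw: "(1 - t w) / ln 2 \<le> f1 w - f2 w" if w: "w \<in> set_pmf M" for w
  proof -
    define a where "a = pmf pAC (A w, C w)"
    define b where "b = pmf pA (A w)"
    define c where "c = pmf pC (C w)"
    define d where "d = pmf pAZ (A w, Z w)"
    define e where "e = pmf pZ (Z w)"
    define g where "g = pmf pCZ (C w, Z w)"
    define rr where "rr = pmf r (A w, C w, Z w)"
    have pos: "0 < a" "0 < b" "0 < c" "0 < d" "0 < e" "0 < g" "0 < rr"
      unfolding a_def b_def c_def d_def e_def g_def rr_def pAC_def pA_def pC_def pAZ_def pZ_def pCZ_def r_def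
      by (rule pmf_map_pos[OF w])+
    have ci: "rr * c = a * g" unfolding rr_def c_def a_def g_def by (rule CI[OF w])
    have tw: "t w = d * g / (e * rr)" unfolding t_def s_val[OF w] d_def g_def e_def rr_def by simp
    have tpos: "0 < t w" using pos tw by simp
    have "f1 w - f2 w = log 2 (a / (b * c)) - log 2 (d / (b * e))"
      unfolding f1_def f2_def a_def b_def c_def d_def e_def by simp
    also have "\<dots> = log 2 ((a / (b * c)) / (d / (b * e)))"
      using pos by (intro log_divide_pos[symmetric]) simp_all
    also have "(a / (b * c)) / (d / (b * e)) = 1 / t w"
      unfolding tw using pos ci
      by (simp add: field_simps)
    also have "log 2 (1 / t w) = - (ln (t w) / ln 2)"
      using tpos by (simp add: log_def ln_div)
    finally have eq: "f1 w - f2 w = - (ln (t w) / ln 2)" .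
    have "ln (t w) \<le> t w - 1" by (rule ln_le_minus_one[OF tpos])
    then have "1 - t w \<le> - ln (t w)" by simp
    then have "(1 - t w) / ln 2 \<le> (- ln (t w)) / ln 2"
      by (rule divide_right_mono) simp
    then have "(1 - t w) / ln 2 \<le> - (ln (t w) / ln 2)" by simp
    then show ?thesis unfolding eq .
  qed
  have "(1 - integral\<^sup>L M t) / ln 2 = (\<integral>w. (1 - t w) / ln 2 \<partial>M)"
    using t_int by (simp add: integral_diff)
  also have "\<dots> \<le> (\<integral>w. f1 w - f2 w \<partial>M)"
  proof (rule integral_mono_AE)
    show "integrable M (\<lambda>w. (1 - t w) / ln 2)" using t_int by simp
    show "integrable M (\<lambda>w. f1 w - f2 w)" using int1 int2 unfolding f2_def by simp
    show "AE w in M. (1 - t w) / ln 2 \<le> f1 w - f2 w"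
      unfolding AE_measure_pmf_iff using pw by blast
  qed
  also have "\<dots> = integral\<^sup>L M f1 - integral\<^sup>L M f2"
    using int1 int2 unfolding f2_def by (simp add: integral_diff)
  finally have "(1 - integral\<^sup>L M t) / ln 2 \<le> integral\<^sup>L M f1 - integral\<^sup>L M f2" .
  moreover have "0 \<le> (1 - integral\<^sup>L M t) / ln 2" using t_le by simp
  ultimately show ?thesis unfolding MI1 MI2 by simp
qed



lemma MI_pair_form:
  fixes M :: "'w pmf" and A :: "'w \<Rightarrow> 's" and B :: "'w \<Rightarrow> 't"
  assumes fin: "finite (A ` set_pmf M)"
  shows "MI M A B = (\<integral>x. log 2 (pmf (map_pmf (\<lambda>w. (A w, B w)) M) x /
     (pmf (map_pmf fst (map_pmf (\<lambda>w. (A w, B w)) M)) (fst x) *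
      pmf (map_pmf snd (map_pmf (\<lambda>w. (A w, B w)) M)) (snd x))) \<partial>map_pmf (\<lambda>w. (A w, B w)) M)"
  unfolding MI_formula[OF fin] by (simp add: map_pmf_comp)

lemma MI_cong:
  assumes "finite (A ` set_pmf M)" "finite (A' ` set_pmf N)"
    and "map_pmf (\<lambda>w. (A w, B w)) M = map_pmf (\<lambda>w. (A' w, B' w)) N"
  shows "MI M A B = MI N A' B'"
  unfolding MI_pair_form[OF assms(1)] MI_pair_form[OF assms(2)] assms(3) ..

lemma Ent_map_form: "Ent M A = - (\<integral>x. log 2 (pmf (map_pmf A M) x) \<partial>map_pmf A M)"
  unfolding Ent_formula by simp

lemma Ent_cong: "map_pmf A M = map_pmf B N \<Longrightarrow> Ent M A = Ent N B"
  unfolding Ent_map_form by simp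

lemma MI_inj:
  fixes M :: "'w pmf" and A :: "'w \<Rightarrow> 's" and B :: "'w \<Rightarrow> 't" and f :: "'t \<Rightarrow> 'u"
  assumes fin: "finite (A ` set_pmf M)" and inj: "inj_on f (B ` set_pmf M)"
  shows "MI M A (\<lambda>w. f (B w)) = MI M A B"
  unfolding MI_formula[OF fin]
proof (rule integral_cong_AE)
  show "AE w in M. log 2 (pmf (map_pmf (\<lambda>w. (A w, f (B w))) M) (A w, f (B w)) /
          (pmf (map_pmf A M) (A w) * pmf (map_pmf (\<lambda>w. f (B w)) M) (f (B w)))) =
        log 2 (pmf (map_pmf (\<lambda>w. (A w, B w)) M) (A w, B w) / (pmf (map_pmf A M) (A w) * pmf (map_pmf B M) (B w)))"
    unfolding AE_measure_pmf_iff
  proof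
    fix w assume w: "w \<in> set_pmf M"
    have i1: "inj_on (\<lambda>(a, b). (a, f b)) (set_pmf (map_pmf (\<lambda>w. (A w, B w)) M))"
      using inj by (auto simp: inj_on_def)
    have "pmf (map_pmf (\<lambda>w. (A w, f (B w))) M) (A w, f (B w)) =
          pmf (map_pmf (\<lambda>(a, b). (a, f b)) (map_pmf (\<lambda>w. (A w, B w)) M)) ((\<lambda>(a, b). (a, f b)) (A w, B w))"
      by (simp add: map_pmf_comp)
    also have "\<dots> = pmf (map_pmf (\<lambda>w. (A w, B w)) M) (A w, B w)"
      by (rule pmf_map_inj[OF i1]) (use w in simp)
    finally have e1: "pmf (map_pmf (\<lambda>w. (A w, f (B w))) M) (A w, f (B w)) = pmf (map_pmf (\<lambda>w. (A w, B w)) M) (A w, B w)" .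
    have "pmf (map_pmf (\<lambda>w. f (B w)) M) (f (B w)) = pmf (map_pmf f (map_pmf B M)) (f (B w))"
      by (simp add: map_pmf_comp)
    also have "\<dots> = pmf (map_pmf B M) (B w)"
      by (rule pmf_map_inj) (use w inj in simp_all)
    finally have e2: "pmf (map_pmf (\<lambda>w. f (B w)) M) (f (B w)) = pmf (map_pmf B M) (B w)" .
    show "log 2 (pmf (map_pmf (\<lambda>w. (A w, f (B w))) M) (A w, f (B w)) /
          (pmf (map_pmf A M) (A w) * pmf (map_pmf (\<lambda>w. f (B w)) M) (f (B w)))) =
        log 2 (pmf (map_pmf (\<lambda>w. (A w, B w)) M) (A w, B w) / (pmf (map_pmf A M) (A w) * pmf (map_pmf B M) (B w)))"
      unfolding e1 e2 ..
  qed
qed simp_all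

lemma MI_nonneg:
  fixes M :: "'w pmf" and A :: "'w \<Rightarrow> 'a" and C :: "'w \<Rightarrow> 'c"
  assumes finA: "finite (A ` set_pmf M)" and finC: "finite (C ` set_pmf M)"
  shows "0 \<le> MI M A C"
proof -
  have e1: "pmf (map_pmf (\<lambda>w. (A w, Z w)) M) (a, z) = pmf (map_pmf A M) a" if "\<And>w. Z w = ()" for Z :: "'w \<Rightarrow> unit" and a z
    unfolding pmf_map by (rule arg_cong[where f="measure M"]) (auto simp: that)
  have e2: "pmf (map_pmf (\<lambda>w. (A w, C w, Z w)) M) (a, c, z) = pmf (map_pmf (\<lambda>w. (A w, C w)) M) (a, c)" if "\<And>w. Z w = ()" for Z :: "'w \<Rightarrow> unit" and a c z
    unfolding pmf_map by (rule arg_cong[where f="measure M"]) (auto simp: that)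
  have e3: "pmf (map_pmf (\<lambda>w. (C w, Z w)) M) (c, z) = pmf (map_pmf C M) c" if "\<And>w. Z w = ()" for Z :: "'w \<Rightarrow> unit" and c z
    unfolding pmf_map by (rule arg_cong[where f="measure M"]) (auto simp: that)
  define Z :: "'w \<Rightarrow> unit" where "Z = (\<lambda>_. ())"
  have Zu: "\<And>w. Z w = ()" unfolding Z_def by simp
  have pZ: "pmf (map_pmf Z M) z = 1" for z
    unfolding Z_def by (simp add: map_pmf_const)
  have "MI M A Z \<le> MI M A C"
  proof (rule DPI_int[OF finA finC])
    show "pmf (map_pmf (\<lambda>w. (A w, C w, Z w)) M) (A w, C w, Z w) * pmf (map_pmf C M) (C w) =
         pmf (map_pmf (\<lambda>w. (A w, C w)) M) (A w, C w) * pmf (map_pmf (\<lambda>w. (C w, Z w)) M) (C w, Z w)" for w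
      unfolding e2[OF Zu] e3[OF Zu] ..
    show "integrable M (\<lambda>w. log 2 (pmf (map_pmf (\<lambda>w. (A w, Z w)) M) (A w, Z w) /
        (pmf (map_pmf A M) (A w) * pmf (map_pmf Z M) (Z w))))"
      unfolding e1[OF Zu] pZ
      by (rule integrable_fin_image[OF finA, of "\<lambda>a. log 2 (pmf (map_pmf A M) a / (pmf (map_pmf A M) a * 1))"])
  qed
  moreover have "MI M A Z = 0"
    unfolding MI_formula[OF finA] e1[OF Zu] pZ
    by (rule integral_eq_zero_AE) (auto simp: AE_measure_pmf_iff log_def)
  ultimately show ?thesis by simp
qed

lemma DPI:
  fixes M :: "'w pmf" and A :: "'w \<Rightarrow> 'a" and C :: "'w \<Rightarrow> 'c" and Z :: "'w \<Rightarrow> 'z"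
  assumes finA: "finite (A ` set_pmf M)" and finC: "finite (C ` set_pmf M)"
    and CI: "\<And>w. w \<in> set_pmf M \<Longrightarrow>
      pmf (map_pmf (\<lambda>w. (A w, C w, Z w)) M) (A w, C w, Z w) * pmf (map_pmf C M) (C w) =
      pmf (map_pmf (\<lambda>w. (A w, C w)) M) (A w, C w) * pmf (map_pmf (\<lambda>w. (C w, Z w)) M) (C w, Z w)"
  shows "MI M A Z \<le> MI M A C"
proof (cases "integrable M (\<lambda>w. log 2 (pmf (map_pmf (\<lambda>w. (A w, Z w)) M) (A w, Z w) /
        (pmf (map_pmf A M) (A w) * pmf (map_pmf Z M) (Z w))))")
  case True
  show ?thesis by (rule DPI_int[OF finA finC CI True])
next
  case False
  then have "MI M A Z = 0" unfolding MI_formula[OF finA] by (rule not_integrable_integral_eq)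
  then show ?thesis using MI_nonneg[OF finA finC] by simp
qed



lemma set_ext: "w \<in> set_pmf (ext P X q) \<Longrightarrow> fst w \<in> set_pmf P"
  by (auto simp: ext_def set_bind_pmf)

lemma map_fst_ext: "map_pmf fst (ext P X q) = P"
  by (simp add: ext_def map_bind_pmf map_pmf_comp bind_return_pmf')

lemma ext_return: "ext P X (\<lambda>x. return_pmf (k x)) = map_pmf (\<lambda>\<omega>. (\<omega>, k (X \<omega>))) P"
  by (simp add: ext_def map_pmf_def bind_return_pmf)

lemma map_comp_fst_ext: "map_pmf (\<lambda>w. F (fst w)) (ext P X q) = map_pmf F P"
proof -
  have "map_pmf (\<lambda>w. F (fst w)) (ext P X q) = map_pmf F (map_pmf fst (ext P X q))"
    by (simp add: map_pmf_comp)
  then show ?thesis by (simp add: map_fst_ext)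
qed

lemma pmf_ext3:
  "pmf (map_pmf (\<lambda>w. (Y (fst w), X (fst w), snd w)) (ext P X q)) (a, c, z) =
     measure P {\<omega>. Y \<omega> = a \<and> X \<omega> = c} * pmf (q c) z"
proof -
  have "map_pmf (\<lambda>w. (Y (fst w), X (fst w), snd w)) (ext P X q) =
        bind_pmf P (\<lambda>\<omega>. map_pmf (\<lambda>z. (Y \<omega>, X \<omega>, z)) (q (X \<omega>)))"
    by (simp add: ext_def map_bind_pmf map_pmf_comp)
  then have "pmf (map_pmf (\<lambda>w. (Y (fst w), X (fst w), snd w)) (ext P X q)) (a, c, z) =
      (\<integral>\<omega>. pmf (map_pmf (\<lambda>z. (Y \<omega>, X \<omega>, z)) (q (X \<omega>))) (a, c, z) \<partial>P)"
    by (simp add: pmf_bind)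
  also have "\<dots> = (\<integral>\<omega>. indicator {\<omega>. Y \<omega> = a \<and> X \<omega> = c} \<omega> * pmf (q c) z \<partial>P)"
  proof (rule Bochner_Integration.integral_cong)
    fix \<omega>
    show "pmf (map_pmf (\<lambda>z. (Y \<omega>, X \<omega>, z)) (q (X \<omega>))) (a, c, z) =
          indicator {\<omega>. Y \<omega> = a \<and> X \<omega> = c} \<omega> * pmf (q c) z"
      by (cases "Y \<omega> = a \<and> X \<omega> = c") (auto simp: pmf_map vimage_def measure_pmf_single)
  qed simp
  also have "\<dots> = measure P {\<omega>. Y \<omega> = a \<and> X \<omega> = c} * pmf (q c) z"
    by simp
  finally show ?thesis .
qed

lemma pmf_ext2:
  "pmf (map_pmf (\<lambda>w. (X (fst w), snd w)) (ext P X q)) (c, z) =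
     measure P {\<omega>. X \<omega> = c} * pmf (q c) z"
proof -
  have "map_pmf (\<lambda>w. (X (fst w), snd w)) (ext P X q) =
        bind_pmf P (\<lambda>\<omega>. map_pmf (\<lambda>z. (X \<omega>, z)) (q (X \<omega>)))"
    by (simp add: ext_def map_bind_pmf map_pmf_comp)
  then have "pmf (map_pmf (\<lambda>w. (X (fst w), snd w)) (ext P X q)) (c, z) =
      (\<integral>\<omega>. pmf (map_pmf (\<lambda>z. (X \<omega>, z)) (q (X \<omega>))) (c, z) \<partial>P)"
    by (simp add: pmf_bind)
  also have "\<dots> = (\<integral>\<omega>. indicator {\<omega>. X \<omega> = c} \<omega> * pmf (q c) z \<partial>P)"
  proof (rule Bochner_Integration.integral_cong)
    fix \<omega>
    show "pmf (map_pmf (\<lambda>z. (X \<omega>, z)) (q (X \<omega>))) (c, z) =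
          indicator {\<omega>. X \<omega> = c} \<omega> * pmf (q c) z"
      by (cases "X \<omega> = c") (auto simp: pmf_map vimage_def measure_pmf_single)
  qed simp
  also have "\<dots> = measure P {\<omega>. X \<omega> = c} * pmf (q c) z"
    by simp
  finally show ?thesis .
qed

lemma Indep_const: "Indep M A (\<lambda>_. k)"
  unfolding Indep_def by (auto simp: measure_pmf.prob_space)

lemma Indep_q0: "Indep (ext P X (\<lambda>_. return_pmf 0)) snd G"
  unfolding Indep_def
proof (intro allI)
  fix a b
  have E: "ext P X (\<lambda>_. return_pmf 0) = map_pmf (\<lambda>\<omega>. (\<omega>, 0::nat)) P"
    using ext_return[of P X "\<lambda>_. 0"] by simp
  show "measure_pmf.prob (ext P X (\<lambda>_. return_pmf 0)) {w. snd w = a \<and> G w = b} =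
        measure_pmf.prob (ext P X (\<lambda>_. return_pmf 0)) {w. snd w = a} *
        measure_pmf.prob (ext P X (\<lambda>_. return_pmf 0)) {w. G w = b}"
    unfolding E by (cases "a = 0") (simp_all add: measure_map_pmf vimage_def measure_pmf.prob_space)
qed



theorem lemmaA1:
  fixes P :: "'a pmf" and X :: "'a \<Rightarrow> 'x" and Y :: "'a \<Rightarrow> 'y" and D :: "'a \<Rightarrow> 'd"
    and g :: "'d \<Rightarrow> nat" and u :: "'a \<Rightarrow> nat"
  assumes "finite (set_pmf P)"
    and "\<forall>g' u'. Ix P X D g' u' + Iy P X Y D g' \<le> Ix P X D g u + Iy P X Y D g"
  shows "Ix P X D g u = Ent P X \<and> Iy P X Y D g = MI P Y X"
proof -
  have finP: "finite (set_pmf P)" by fact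
  have finXP: "finite (X ` set_pmf P)" using finP by simp
  have finYP: "finite (Y ` set_pmf P)" using finP by simp
  have finX: "finite ((\<lambda>w. X (fst w)) ` set_pmf (ext P X q))" for q
    by (rule finite_subset[OF _ finXP]) (use set_ext in blast)
  have finY: "finite ((\<lambda>w. Y (fst w)) ` set_pmf (ext P X q))" for q
    by (rule finite_subset[OF _ finYP]) (use set_ext in blast)
  have Ix_each: "MI (ext P X q) (\<lambda>w. X (fst w)) (\<lambda>w. (u' (fst w), g' (D (fst w)), snd w)) \<le> Ent P X"
    for q and g' :: "'d \<Rightarrow> nat" and u' :: "'a \<Rightarrow> nat"
  proof -
    have "MI (ext P X q) (\<lambda>w. X (fst w)) (\<lambda>w. (u' (fst w), g' (D (fst w)), snd w)) \<le> Ent (ext P X q) (\<lambda>w. X (fst w))"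
      by (rule MI_le_Ent[OF finX])
    also have "\<dots> = Ent P X" by (rule Ent_cong[OF map_comp_fst_ext])
    finally show ?thesis .
  qed
  have Iy_each: "MI (ext P X q) (\<lambda>w. Y (fst w)) snd \<le> MI P Y X" for q
  proof -
    have "MI (ext P X q) (\<lambda>w. Y (fst w)) snd \<le> MI (ext P X q) (\<lambda>w. Y (fst w)) (\<lambda>w. X (fst w))"
    proof (rule DPI[OF finY finX])
      fix w
      have pC: "pmf (map_pmf (\<lambda>w. X (fst w)) (ext P X q)) c = measure P {\<omega>. X \<omega> = c}" for c
        unfolding map_comp_fst_ext pmf_map vimage_def by simp
      have pAC: "pmf (map_pmf (\<lambda>w. (Y (fst w), X (fst w))) (ext P X q)) (a, c) = measure P {\<omega>. Y \<omega> = a \<and> X \<omega> = c}" for a c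
        using map_comp_fst_ext[of "\<lambda>\<omega>. (Y \<omega>, X \<omega>)" P X q]
        by (simp add: pmf_map vimage_def)
      show "pmf (map_pmf (\<lambda>w. (Y (fst w), X (fst w), snd w)) (ext P X q)) (Y (fst w), X (fst w), snd w) *
            pmf (map_pmf (\<lambda>w. X (fst w)) (ext P X q)) (X (fst w)) =
            pmf (map_pmf (\<lambda>w. (Y (fst w), X (fst w))) (ext P X q)) (Y (fst w), X (fst w)) *
            pmf (map_pmf (\<lambda>w. (X (fst w), snd w)) (ext P X q)) (X (fst w), snd w)"
        unfolding pmf_ext3 pmf_ext2 pC pAC by simp
    qed
    also have "\<dots> = MI P Y X"
      by (rule MI_cong[OF finY finYP]) (rule map_comp_fst_ext[of "\<lambda>\<omega>. (Y \<omega>, X \<omega>)"])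
    finally show ?thesis .
  qed
  have ne: "{q. Indep (ext P X q) snd (\<lambda>w. g' (D (fst w)))} \<noteq> {}" for g' :: "'d \<Rightarrow> nat"
    using Indep_q0 by blast
  have Ix_le: "Ix P X D g' u' \<le> Ent P X" for g' u'
    unfolding Ix_def by (rule cSUP_least[OF ne]) (rule Ix_each)
  have Iy_le: "Iy P X Y D g' \<le> MI P Y X" for g'
    unfolding Iy_def by (rule cSUP_least[OF ne]) (rule Iy_each)
  define enc where "enc = to_nat_on (X ` set_pmf P)"
  have inj_enc: "inj_on enc (X ` set_pmf P)"
    unfolding enc_def by (rule inj_on_to_nat_on) (use finXP in \<open>simp add: countable_finite\<close>)
  define g0 :: "'d \<Rightarrow> nat" where "g0 = (\<lambda>_. 0)"
  define u0 :: "'a \<Rightarrow> nat" where "u0 = (\<lambda>\<omega>. enc (X \<omega>))"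
  have Ix0: "Ent P X \<le> Ix P X D g0 u0"
  proof -
    define q0 :: "'x \<Rightarrow> nat pmf" where "q0 = (\<lambda>_. return_pmf 0)"
    have "Ent P X = Ent (ext P X q0) (\<lambda>w. X (fst w))"
      by (rule Ent_cong[OF map_comp_fst_ext, symmetric])
    also have "\<dots> = MI (ext P X q0) (\<lambda>w. X (fst w)) (\<lambda>w. (u0 (fst w), g0 (D (fst w)), snd w))"
    proof (rule MI_eq_Ent_det[OF finX, symmetric])
      fix w w' assume w: "w \<in> set_pmf (ext P X q0)" and w': "w' \<in> set_pmf (ext P X q0)"
        and eq: "(u0 (fst w), g0 (D (fst w)), snd w) = (u0 (fst w'), g0 (D (fst w')), snd w')"
      then have "enc (X (fst w)) = enc (X (fst w'))" unfolding u0_def by simp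
      then show "X (fst w) = X (fst w')"
        by (rule inj_onD[OF inj_enc]) (use set_ext[OF w] set_ext[OF w'] in auto)
    qed
    also have "\<dots> \<le> Ix P X D g0 u0"
      unfolding Ix_def
    proof (rule cSUP_upper)
      show "q0 \<in> {q. Indep (ext P X q) snd (\<lambda>w. g0 (D (fst w)))}"
        unfolding g0_def by (simp add: Indep_const)
      show "bdd_above ((\<lambda>q. MI (ext P X q) (\<lambda>w. X (fst w)) (\<lambda>w. (u0 (fst w), g0 (D (fst w)), snd w))) `
          {q. Indep (ext P X q) snd (\<lambda>w. g0 (D (fst w)))})"
        by (rule bdd_aboveI2) (rule Ix_each)
    qed
    finally show ?thesis .
  qed
  have Iy0: "MI P Y X \<le> Iy P X Y D g0"
  proof -
    define q1 :: "'x \<Rightarrow> nat pmf" where "q1 = (\<lambda>x. return_pmf (enc x))"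
    have E1: "ext P X q1 = map_pmf (\<lambda>\<omega>. (\<omega>, enc (X \<omega>))) P"
      unfolding q1_def by (rule ext_return)
    have "MI P Y X = MI P Y (\<lambda>\<omega>. enc (X \<omega>))"
      by (rule MI_inj[OF finYP inj_enc, symmetric])
    also have "\<dots> = MI (ext P X q1) (\<lambda>w. Y (fst w)) snd"
      by (rule MI_cong[OF finYP finY]) (simp add: E1 map_pmf_comp)
    also have "\<dots> \<le> Iy P X Y D g0"
      unfolding Iy_def
    proof (rule cSUP_upper)
      show "q1 \<in> {q. Indep (ext P X q) snd (\<lambda>w. g0 (D (fst w)))}"
        unfolding g0_def by (simp add: Indep_const)
      show "bdd_above ((\<lambda>q. MI (ext P X q) (\<lambda>w. Y (fst w)) snd) `
          {q. Indep (ext P X q) snd (\<lambda>w. g0 (D (fst w)))})"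
        by (rule bdd_aboveI2) (rule Iy_each)
    qed
    finally show ?thesis .
  qed
  have "Ix P X D g0 u0 + Iy P X Y D g0 \<le> Ix P X D g u + Iy P X Y D g"
    using assms(2) by blast
  then show ?thesis using Ix0 Iy0 Ix_le[of g u] Iy_le[of g] by linarith
qed

end
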